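(* Let $S$ be an atom-simple Stone relation algebra with finitely many atoms, and let $C : S\to\mathbb{N}$ map each $x$ to the number of atoms below $x$. Assume that for all $x\in S$, $C(x)=0\iff x=\bot$, and that $C(\top)=C(1)^2$. Then $S$ is atomic and atom-rectangular, and hence $S$ is a representable relation algebra.
   Context: A Stone relation algebra is a structure $(S,\sqcup,\sqcap,\cdot,\overline{\,\cdot\,},{}^{\smile},\bot,\top,1)$ (write $xy$ for $x\cdot y$, $\overline{x}$ for the pseudocomplement, $x^{\smile}$ for the converse) such that: $(S,\sqcup,\sqcap,\bot,\top)$ is a bounded distributive lattice with order $x\sqsubseteq y\iff x\sqcup y=y$; $x\sqcap y=\bot\iff x\sqsubseteq\overline{y}$; $\overline{x}\sqcup\overline{\overline{x}}=\top$; $\cdot$ is associative with two-sided unit $1$, distributes over $\sqcup$ on both sides, and $\bot$ is a zero of $\cdot$; $x^{\smile\smile}=x$, $(xy)^{\smile}=y^{\smile}x^{\smile}$, $(x\sqcup y)^{\smile}=x^{\smile}\sqcup y^{\smile}$; $\overline{\overline{1}}=1$; $\overline{\overline{xy}}=\overline{\overline{x}}\,\overline{\overline{y}}$; $xy\sqcap z\sqsubseteq x(y\sqcap x^{\smile}z)$. A relation algebra is a Stone relation algebra with $\overline{\overline{x}}=x$ for all $x$; it is representable if it is isomorphic to an algebra of binary relations (on some base set) with the usual relational operations (union, intersection, complement, relational composition, converse, empty relation, greatest relation, identity). An atom is an element $x\neq\bot$ such that $\bot\neq y\sqsubseteq x$ implies $y=x$. An element $x$ is a rectangle if $x\top x\sqsubseteq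 x$ and simple if $\top x\top=\top$. $S$ is atomic if every $x\neq\bot$ has an atom below it; atom-rectangular if every atom is a rectangle; atom-simple if every atom is simple. *)

theory Defs
  imports Main
begin

text \<open>Stone relation algebras. The lattice is given by Main's inf/sup/bot/top
(order: x \<le> y iff sup x y = y), the pseudocomplement by uminus, composition by
times with unit 1, and the converse by conv.\<close>

class stone_relation_algebra = distrib_lattice + bounded_lattice + monoid_mult + uminus +
  fixes conv :: "'a \<Rightarrow> 'a"
  assumes pseudo_complement: "inf x y = bot \<longleftrightarrow> x \<le> - y"
  and stone: "sup (- x) (- (- x)) = top"
  and comp_sup_distr_left: "x * sup y z = sup (x * y) (x * z)"
  and comp_sup_distr_right: "sup x y * z = sup (x * z) (y * z)"
  and comp_bot_left: "bot * x = bot"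
  and comp_bot_right: "x * bot = bot"
  and conv_involutive: "conv (conv x) = x"
  and conv_comp: "conv (x * y) = conv y * conv x"
  and conv_sup: "conv (sup x y) = sup (conv x) (conv y)"
  and pp_one: "- (- (1::'a)) = 1"
  and pp_comp: "- (- (x * y)) = (- (- x)) * (- (- y))"
  and dedekind1: "inf (x * y) z \<le> x * inf y (conv x * z)"
begin

definition atom :: "'a \<Rightarrow> bool" where
  "atom x \<longleftrightarrow> x \<noteq> bot \<and> (\<forall>y. y \<noteq> bot \<and> y \<le> x \<longrightarrow> y = x)"

definition rectangle :: "'a \<Rightarrow> bool" where
  "rectangle x \<longleftrightarrow> x * top * x \<le> x"

definition simple :: "'a \<Rightarrow> bool" where
  "simple x \<longleftrightarrow> top * x * top = top"

end

definition atomic :: "'a::stone_relation_algebra itself \<Rightarrow> bool" where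
  "atomic (_::'a::stone_relation_algebra itself) \<longleftrightarrow> (\<forall>x::'a::stone_relation_algebra. x \<noteq> bot \<longrightarrow> (\<exists>a. atom a \<and> a \<le> x))"

definition atom_rectangular :: "'a::stone_relation_algebra itself \<Rightarrow> bool" where
  "atom_rectangular (_::'a::stone_relation_algebra itself) \<longleftrightarrow> (\<forall>a::'a::stone_relation_algebra. atom a \<longrightarrow> rectangle a)"

definition atom_simple :: "'a::stone_relation_algebra itself \<Rightarrow> bool" where
  "atom_simple (_::'a::stone_relation_algebra itself) \<longleftrightarrow> (\<forall>a::'a::stone_relation_algebra. atom a \<longrightarrow> simple a)"

definition count_atoms :: "'a::stone_relation_algebra \<Rightarrow> nat" where
  "count_atoms x = card {a. atom a \<and> a \<le> x}"

text \<open>Relation algebra: the pseudocomplement is a Boolean complement.\<close>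
definition relation_algebra :: "'a::stone_relation_algebra itself \<Rightarrow> bool" where
  "relation_algebra (_::'a::stone_relation_algebra itself) \<longleftrightarrow> (\<forall>x::'a::stone_relation_algebra. - (- x) = x)"

text \<open>Representability: an injective homomorphism into the full algebra of binary
relations on some base set A (here taken as a set of natural numbers); its image is
an algebra of binary relations isomorphic to the whole structure.\<close>
definition representable :: "'a::stone_relation_algebra itself \<Rightarrow> bool" where
  "representable (_::'a::stone_relation_algebra itself) \<longleftrightarrow> relation_algebra TYPE('a) \<and>
     (\<exists>(A::nat set) (f :: 'a::stone_relation_algebra \<Rightarrow> (nat \<times> nat) set).
        inj f \<and>
        (\<forall>x y. f (sup x y) = f x \<union> f y) \<and>
        (\<forall>x y. f (inf x y) = f x \<inter> f y) \<and>
        (\<forall>x. f (- x) = (A \<times> A) - f x) \<and>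
        (\<forall>x y. f (x * y) = f x O f y) \<and>
        (\<forall>x. f (conv x) = (f x)\<inverse>) \<and>
        f bot = {} \<and> f top = A \<times> A \<and> f 1 = Id_on A)"


end

theory Submission imports Defs begin

context stone_relation_algebra
begin

lemma cm_r: "y \<le> z \<Longrightarrow> x * y \<le> x * z"
  by (metis comp_sup_distr_left le_iff_sup sup_ge1)

lemma cm_l: "y \<le> z \<Longrightarrow> y * x \<le> z * x"
  by (metis comp_sup_distr_right le_iff_sup sup_ge1)

lemma cm: "x \<le> y \<Longrightarrow> u \<le> v \<Longrightarrow> x * u \<le> y * v"
  by (meson cm_l cm_r order_trans)

lemma conv_mono: "x \<le> y \<Longrightarrow> conv x \<le> conv y"
  by (metis conv_sup le_iff_sup)

lemma conv_le_iff: "conv x \<le> y \<longleftrightarrow> x \<le> conv y"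
  by (metis conv_involutive conv_mono)

lemma conv_top: "conv top = top"
  by (metis conv_le_iff top.extremum top.extremum_unique)

lemma conv_bot: "conv bot = bot"
  by (metis bot.extremum bot.extremum_unique conv_le_iff)

lemma conv_inf: "conv (inf x y) = inf (conv x) (conv y)"
proof (rule order.antisym)
  show "conv (inf x y) \<le> inf (conv x) (conv y)" by (simp add: conv_mono)
  have "conv (inf (conv x) (conv y)) \<le> inf x y"
    by (metis conv_involutive conv_mono inf.cobounded1 inf.cobounded2 le_inf_iff)
  then show "inf (conv x) (conv y) \<le> conv (inf x y)" using conv_le_iff by blast
qed

lemma pp_inc: "x \<le> - (- x)"
  using pseudo_complement by (metis inf.commute order_refl)

lemma inf_pc: "inf x (- x) = bot"
  using pseudo_complement pp_inc by blast

lemma pc_anti: "x \<le> y \<Longrightarrow> - y \<le> - x"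
  by (metis inf.absorb_iff2 inf_left_commute inf_pc pseudo_complement inf.commute)

lemma ppp: "- (- (- x)) = - x"
  by (simp add: order.antisym pc_anti pp_inc)

lemma pc_bot: "- bot = top"
  by (metis inf_bot_right pseudo_complement top.extremum_unique order_refl)

lemma pc_top: "- top = bot"
  by (metis inf_pc inf_top_left)

lemma pp_top: "- (- top) = top"
  by (simp add: pc_bot pc_top)

lemma pp_bot: "- (- bot) = bot"
  by (simp add: pc_bot pc_top)

lemma pc_sup: "- (sup x y) = inf (- x) (- y)"
proof (rule order.antisym)
  show "- sup x y \<le> inf (- x) (- y)" by (simp add: pc_anti)
  have "inf (inf (- x) (- y)) (sup x y) = sup (inf (inf (- x) (- y)) x) (inf (inf (- x) (- y)) y)"
    by (rule inf_sup_distrib1)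
  also have "inf (inf (- x) (- y)) x = bot"
    by (metis inf.commute inf_bot_right inf_left_commute inf_pc)
  also have "inf (inf (- x) (- y)) y = bot"
    by (metis inf.commute inf_bot_right inf_left_commute inf_pc)
  finally have "inf (inf (- x) (- y)) (sup x y) = bot" by simp
  then show "inf (- x) (- y) \<le> - sup x y" using pseudo_complement by blast
qed

lemma dedekind2: "inf (x * y) z \<le> inf x (z * conv y) * y"
proof -
  have "conv (inf (x * y) z) = inf (conv y * conv x) (conv z)"
    by (simp add: conv_inf conv_comp)
  also have "\<dots> \<le> conv y * inf (conv x) (conv (conv y) * conv z)"
    by (rule dedekind1)
  also have "\<dots> = conv (inf x (z * conv y) * y)"
    by (simp add: conv_inf conv_comp conv_involutive)
  finally show ?thesis
    by (metis conv_involutive conv_mono)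
qed

lemma cor_conv: assumes "p \<le> 1" shows "conv p = p"
proof -
  have "p = inf (p * 1) 1" using assms by (simp add: inf.absorb1)
  also have "\<dots> \<le> p * inf 1 (conv p * 1)" by (rule dedekind1)
  also have "\<dots> \<le> p * conv p" by (simp add: cm_r)
  also have "\<dots> \<le> 1 * conv p" using assms cm_l by blast
  finally have 1: "p \<le> conv p" by simp
  then have "conv p \<le> p" by (metis conv_involutive conv_mono)
  with 1 show ?thesis by simp
qed

lemma cor_comp: assumes "p \<le> 1" "q \<le> 1" shows "p * q = inf p q"
proof (rule order.antisym)
  show "p * q \<le> inf p q"
    by (metis assms cm_l cm_r le_inf_iff mult_1_left mult_1_right)
  have "inf p q = inf (p * 1) q" by simp
  also have "\<dots> \<le> p * inf 1 (conv p * q)" by (rule dedekind1)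
  also have "\<dots> \<le> p * (p * q)" using cor_conv[OF assms(1)] by (simp add: cm_r)
  also have "\<dots> = (p * p) * q" by (simp add: mult.assoc)
  also have "\<dots> \<le> p * q" by (metis assms(1) cm_l cm_r mult_1_right)
  finally show "inf p q \<le> p * q" .
qed

lemma cor_idem: "p \<le> 1 \<Longrightarrow> p * p = p"
  by (simp add: cor_comp)


lemma atom_nbot: "atom a \<Longrightarrow> a \<noteq> bot" by (simp add: atom_def)

lemma atom_cases: assumes a: "atom a" shows "a \<le> x \<or> a \<le> - x"
proof (cases "inf a x = bot")
  case True then show ?thesis using pseudo_complement by blast
next
  case False then have "inf a x = a" using a unfolding atom_def by (meson inf.cobounded1)
  then show ?thesis by (metis inf.orderI inf.cobounded2)
qed

lemma atom_not_both: "atom a \<Longrightarrow> a \<le> x \<Longrightarrow> a \<le> - x \<Longrightarrow> False"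
  by (metis atom_nbot inf_pc le_inf_iff bot.extremum_unique)

lemma atom_inf: "atom a \<Longrightarrow> \<not> a \<le> x \<Longrightarrow> inf a x = bot"
  using atom_cases pseudo_complement by blast

lemma atom_prime: assumes "atom a" "a \<le> sup x y" shows "a \<le> x \<or> a \<le> y"
proof (rule ccontr)
  assume "\<not> (a \<le> x \<or> a \<le> y)"
  then have "inf a x = bot" "inf a y = bot" using assms atom_inf by auto
  then have "inf a (sup x y) = bot" by (simp add: inf_sup_distrib1)
  then show False using assms by (metis atom_nbot inf.absorb1)
qed

lemma atoms_eq: assumes "atom a" "atom b" "inf a b \<noteq> bot" shows "a = b"
  using assms unfolding atom_def by (metis inf.cobounded1 inf.cobounded2)

definition reg :: "'a \<Rightarrow> bool" where "reg x \<longleftrightarrow> - (- x) = x"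

lemma reg_sup: assumes rx: "reg x" and ry: "reg y" shows "reg (sup x y)"
proof -
  define u where "u = - x"
  define v where "v = - y"
  define w where "w = - (inf u v)"
  have ppsup: "- (- (sup x y)) = w" by (simp add: pc_sup u_def v_def w_def)
  have xu: "sup x u = top" using stone[of x] rx unfolding reg_def u_def by (simp add: sup.commute)
  have yv: "sup y v = top" using stone[of y] ry unfolding reg_def v_def by (simp add: sup.commute)
  have wuv: "inf (inf w u) v = bot" unfolding w_def
    by (metis inf.assoc inf.commute inf_pc)
  have "w = inf w (sup x u)" using xu by simp
  also have "\<dots> = sup (inf w x) (inf w u)" by (rule inf_sup_distrib1)
  also have "inf w u = inf (inf w u) (sup y v)" using yv by simp
  also have "\<dots> = sup (inf (inf w u) y) (inf (inf w u) v)" by (rule inf_sup_distrib1)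
  also have "\<dots> = inf (inf w u) y" using wuv by simp
  finally have "w \<le> sup x y"
    by (metis inf.cobounded2 le_infE sup_mono)
  moreover have "sup x y \<le> w" using ppsup pp_inc by metis
  ultimately show ?thesis unfolding reg_def using ppsup
    by (simp add: order.antisym)
qed

lemma reg_bot: "reg bot" by (simp add: reg_def pp_bot)

primrec sl :: "'a list \<Rightarrow> 'a" where
  "sl [] = bot"
| "sl (a # xs) = sup a (sl xs)"

lemma sl_ub: "a \<in> set xs \<Longrightarrow> a \<le> sl xs"
  by (induct xs) (auto intro: le_supI2)

lemma sl_lub: "\<forall>a\<in>set xs. a \<le> x \<Longrightarrow> sl xs \<le> x"
  by (induct xs) auto

lemma sl_atom: "atom b \<Longrightarrow> b \<le> sl xs \<Longrightarrow> \<exists>a\<in>set xs. b \<le> a"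
proof (induct xs)
  case Nil then show ?case using atom_nbot bot.extremum_unique by auto
next
  case (Cons a xs) then show ?case using atom_prime by auto
qed

lemma sl_reg: "\<forall>a\<in>set xs. reg a \<Longrightarrow> reg (sl xs)"
  by (induct xs) (auto simp: reg_bot reg_sup)

lemma sl_comp: "x * sl xs * y = sl (map (\<lambda>a. x * a * y) xs)"
  by (induct xs) (simp_all add: comp_bot_left comp_bot_right comp_sup_distr_left comp_sup_distr_right)

lemma atom_conv: assumes "atom a" shows "atom (conv a)"
  unfolding atom_def
proof (intro conjI allI impI)
  show "conv a \<noteq> bot" using assms atom_nbot by (metis conv_bot conv_involutive)
  fix y assume "y \<noteq> bot \<and> y \<le> conv a"
  then have "conv y \<noteq> bot" "conv y \<le> a"
    by (metis conv_bot conv_involutive, metis conv_le_iff conv_involutive)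
  then have "conv y = a" using assms unfolding atom_def by blast
  then show "y = conv a" by (metis conv_involutive)
qed

end
context stone_relation_algebra
begin

context
  assumes asimp: "\<And>a. atom a \<Longrightarrow> top * a * top = top"
  and fin: "finite {a. atom a}"
  and atomic: "\<And>x. x \<noteq> bot \<Longrightarrow> \<exists>a. atom a \<and> a \<le> x"
  and cnt: "card {a. atom a} = card {p. atom p \<and> p \<le> 1} ^ 2"
begin

lemma pair_nbot: assumes "atom p" "atom q" shows "p * top * q \<noteq> bot"
proof
  assume h: "p * top * q = bot"
  have "top = top * p * top" using asimp assms by simp
  also have "\<dots> = top * p * (top * q * top)" using asimp assms by simp
  also have "\<dots> = top * (p * top * q) * top" by (simp add: mult.assoc)
  also have "\<dots> = bot" using h by (simp add: comp_bot_left comp_bot_right)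
  finally show False using assms atom_nbot by (metis bot.extremum_unique top_greatest)
qed

lemma cor_disj: assumes "atom p" "atom p'" "p \<noteq> p'" "p \<le> 1" "p' \<le> 1" shows "p * p' = bot"
  using assms atoms_eq cor_comp by blast

lemma disj: assumes "atom p" "p \<le> 1" "atom q" "q \<le> 1" "atom p'" "p' \<le> 1" "atom q'" "q' \<le> 1"
  and ne: "inf (p * top * q) (p' * top * q') \<noteq> bot"
  shows "p = p' \<and> q = q'"
proof (rule ccontr)
  assume "\<not> (p = p' \<and> q = q')"
  then consider "p \<noteq> p'" | "q \<noteq> q'" by blast
  then show False
  proof cases
    case 1
    have "inf (p * (top * q)) (p' * top * q') \<le> p * inf (top * q) (conv p * (p' * top * q'))"
      by (rule dedekind1)
    also have "\<dots> = bot" using cor_conv[OF assms(2)] cor_disj[OF assms(1) assms(5) 1 assms(2) assms(6)]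
      by (simp add: mult.assoc[symmetric] comp_bot_left comp_bot_right)
    finally show False using ne by (simp add: mult.assoc bot.extremum_unique)
  next
    case 2
    have "inf ((p * top) * q) (p' * top * q') \<le> inf (p * top) ((p' * top * q') * conv q) * q"
      by (rule dedekind2)
    also have "\<dots> = bot" using cor_conv[OF assms(4)] cor_disj[OF assms(7) assms(3) _ assms(8) assms(4)] 2
      by (simp add: mult.assoc comp_bot_left comp_bot_right)
    finally show False using ne by (simp add: bot.extremum_unique)
  qed
qed

lemma count_facts:
  "(\<forall>a. atom a \<longrightarrow> (\<exists>p q. atom p \<and> p \<le> 1 \<and> atom q \<and> q \<le> 1 \<and> a \<le> p * top * q))
   \<and> (\<forall>p q a b. atom p \<and> p \<le> 1 \<and> atom q \<and> q \<le> 1 \<and> atom a \<and> a \<le> p * top * q \<and> atom b \<and> b \<le> p * top * q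
        \<longrightarrow> a = b)"
proof -
  define I where "I = {p. atom p \<and> p \<le> 1}"
  define At where "At = {a. atom a}"
  define G where "G = (\<lambda>(p, q). SOME a. atom a \<and> a \<le> p * top * q)"
  have G: "atom (G (p, q)) \<and> G (p, q) \<le> p * top * q" if "p \<in> I" "q \<in> I" for p q
  proof -
    have ex: "\<exists>a. atom a \<and> a \<le> p * top * q" using that pair_nbot atomic unfolding I_def by blast
    show ?thesis unfolding G_def using someI_ex[OF ex] by simp
  qed
  have uniq: "pq = (p, q)" if hh: "pq \<in> I \<times> I" "p \<in> I" "q \<in> I" "atom a" "a \<le> p * top * q" "a \<le> G pq" for pq p q a
  proof -
    obtain p1 q1 where pq: "pq = (p1, q1)" "p1 \<in> I" "q1 \<in> I" using hh(1) by blast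
    have "a \<le> inf (p * top * q) (p1 * top * q1)" using G[OF pq(2,3)] hh pq(1) by (meson le_inf_iff order_trans)
    then have "inf (p * top * q) (p1 * top * q1) \<noteq> bot" using hh(4) atom_nbot bot.extremum_unique by blast
    then show ?thesis using disj hh pq unfolding I_def by blast
  qed
  have inj: "inj_on G (I \<times> I)"
  proof (rule inj_onI)
    fix x y assume xy: "x \<in> I \<times> I" "y \<in> I \<times> I" "G x = G y"
    obtain p q where x: "x = (p, q)" "p \<in> I" "q \<in> I" using xy(1) by blast
    show "x = y" using uniq[OF xy(2) x(2,3)] G[OF x(2,3)] xy(3) x(1) by auto
  qed
  have sub: "G ` (I \<times> I) \<subseteq> At" using G unfolding At_def by auto
  have finI: "finite I" using fin unfolding I_def by (auto intro: finite_subset)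
  have "card (G ` (I \<times> I)) = card At"
  proof -
    have sq: "(card I)^2 = card I * card I" by (simp add: numeral_2_eq_2)
    show ?thesis using card_image[OF inj] cnt sq unfolding I_def At_def by (simp add: card_cartesian_product)
  qed
  then have im: "G ` (I \<times> I) = At" using card_subset_eq[OF fin[folded At_def] sub] by blast
  show ?thesis
  proof (intro conjI allI impI)
    fix a assume "atom a"
    then have "a \<in> G ` (I \<times> I)" using im unfolding At_def by blast
    then obtain p q where "p \<in> I" "q \<in> I" "a = G (p, q)" by blast
    then show "\<exists>p q. atom p \<and> p \<le> 1 \<and> atom q \<and> q \<le> 1 \<and> a \<le> p * top * q"
      using G unfolding I_def by blast
  next
    fix p q a b
    assume h: "atom p \<and> p \<le> 1 \<and> atom q \<and> q \<le> 1 \<and> atom a \<and> a \<le> p * top * q \<and> atom b \<and> b \<le> p * top * q"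
    then have pI: "p \<in> I" "q \<in> I" unfolding I_def by auto
    have "a \<in> G ` (I \<times> I)" "b \<in> G ` (I \<times> I)" using im h unfolding At_def by auto
    then obtain x y where xy: "x \<in> I \<times> I" "y \<in> I \<times> I" "a = G x" "b = G y" by blast
    have "x = (p, q)" "y = (p, q)" using uniq[OF xy(1) pI] uniq[OF xy(2) pI] h xy by auto
    then show "a = b" using xy by simp
  qed
qed


lemma atom_in_rect: "atom a \<Longrightarrow> \<exists>p q. atom p \<and> p \<le> 1 \<and> atom q \<and> q \<le> 1 \<and> a \<le> p * top * q"
  using count_facts by blast

lemma rect_unique: "atom p \<Longrightarrow> p \<le> 1 \<Longrightarrow> atom q \<Longrightarrow> q \<le> 1 \<Longrightarrow> atom a \<Longrightarrow> a \<le> p * top * q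
   \<Longrightarrow> atom b \<Longrightarrow> b \<le> p * top * q \<Longrightarrow> a = b"
  using count_facts by blast

lemma point_facts: assumes p: "atom p" "p \<le> 1" shows "p * top * p \<le> p" "- (- p) = p"
proof -
  have pp: "p * p = p" using cor_idem p by simp
  have "p = p * p * p" using pp by simp
  also have "\<dots> \<le> p * top * p" by (simp add: cm)
  finally have pl: "p \<le> p * top * p" .
  have "inf (p * top * p) (- p) = bot"
  proof (rule ccontr)
    assume "inf (p * top * p) (- p) \<noteq> bot"
    then obtain b where b: "atom b" "b \<le> inf (p * top * p) (- p)" using atomic by blast
    then have "b = p" using rect_unique[OF p p b(1) _ p(1) pl] by simp
    then show False using b atom_not_both[OF p(1), of p] by simp
  qed
  then have ptp: "p * top * p \<le> - (- p)" using pseudo_complement by blast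
  define P where "P = - (- p)"
  have P1: "P \<le> 1" unfolding P_def using pc_anti[OF pc_anti[OF p(2)]] pp_one by simp
  have pP: "p \<le> P" unfolding P_def by (rule pp_inc)
  have PtP: "P * top * P \<le> P"
  proof -
    have "P * top * P = - (- (p * top * p))" unfolding P_def by (simp add: pp_comp pp_top)
    also have "\<dots> \<le> - (- (- (- p)))" using pc_anti[OF pc_anti[OF ptp]] .
    finally show ?thesis unfolding P_def by (simp add: ppp)
  qed
  have Pp: "P * p = p" using cor_comp[OF P1 p(2)] pP by (simp add: inf.absorb2)
  have pP2: "p * P = p" using cor_comp[OF p(2) P1] pP by (simp add: inf.absorb1)
  have "P = P * P * P" using cor_idem[OF P1] by simp
  also have "\<dots> \<le> P * top * P" by (simp add: cm)
  also have "\<dots> = P * (top * p * top) * P" using asimp[OF p(1)] by simp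
  also have "\<dots> = (P * top * P) * p * top * P" using Pp by (simp add: mult.assoc)
  also have "\<dots> \<le> P * p * top * P" using PtP by (simp add: cm)
  also have "\<dots> = p * (P * top * P)" using Pp pP2 by (metis mult.assoc)
  also have "\<dots> \<le> p * P" using PtP by (simp add: cm)
  also have "\<dots> = p" by (rule pP2)
  finally have "P \<le> p" .
  then show "- (- p) = p" using pP unfolding P_def by (simp add: order.antisym)
  show "p * top * p \<le> p" using ptp \<open>- (- p) = p\<close> by simp
qed

lemma atom_is_rect: assumes a: "atom a"
  shows "\<exists>p q. atom p \<and> p \<le> 1 \<and> atom q \<and> q \<le> 1 \<and> a = p * top * q"
proof -
  obtain p q where pq: "atom p" "p \<le> 1" "atom q" "q \<le> 1" "a \<le> p * top * q" using atom_in_rect[OF a] by blast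
  have "a = inf (p * (top * q)) a" using pq(5) by (simp add: mult.assoc inf.absorb2)
  also have "\<dots> \<le> p * inf (top * q) (conv p * a)" by (rule dedekind1)
  also have "\<dots> \<le> p * (p * a)" using cor_conv[OF pq(2)] by (simp add: cm)
  also have "\<dots> = p * a" using cor_idem[OF pq(2)] by (simp add: mult.assoc[symmetric])
  finally have pa1: "a \<le> p * a" .
  have "p * a \<le> 1 * a" using pq(2) by (rule cm_l)
  then have pa: "p * a = a" using pa1 by (simp add: order.antisym)
  have "a = inf ((p * top) * q) a" using pq(5) by (simp add: inf.absorb2)
  also have "\<dots> \<le> inf (p * top) (a * conv q) * q" by (rule dedekind2)
  also have "\<dots> \<le> (a * q) * q" using cor_conv[OF pq(4)] by (simp add: cm)
  also have "\<dots> = a * q" using cor_idem[OF pq(4)] by (simp add: mult.assoc)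
  finally have aq1: "a \<le> a * q" .
  have "a * q \<le> a * 1" using pq(4) by (rule cm_r)
  then have aq: "a * q = a" using aq1 by (simp add: order.antisym)
  have "p * top * q = p * (top * a * top) * q" using asimp[OF a] by simp
  also have "\<dots> = p * top * (p * a * q) * top * q" using pa aq by (simp add: mult.assoc)
  also have "\<dots> = (p * top * p) * a * (q * top * q)" by (simp add: mult.assoc)
  also have "\<dots> \<le> p * a * q" using point_facts(1)[OF pq(1,2)] point_facts(1)[OF pq(3,4)] by (simp add: cm)
  also have "\<dots> = a" using pa aq by simp
  finally have "p * top * q \<le> a" .
  then show ?thesis using pq by (metis order.antisym)
qed

lemma atom_reg: assumes "atom a" shows "- (- a) = a"
proof -
  obtain p q where pq: "atom p" "p \<le> 1" "atom q" "q \<le> 1" "a = p * top * q" using atom_is_rect[OF assms] by blast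
  show ?thesis using pq point_facts(2)[OF pq(1,2)] point_facts(2)[OF pq(3,4)] by (simp add: pp_comp pp_top)
qed

lemma all_decomp: "\<exists>xs. set xs = {a. atom a \<and> a \<le> x} \<and> sl xs = x \<and> - (- x) = x"
proof -
  have "finite {a. atom a \<and> a \<le> x}" using fin by (auto intro: finite_subset)
  then obtain xs where xs: "set xs = {a. atom a \<and> a \<le> x}" using finite_list by blast
  have r: "reg (sl xs)" using sl_reg xs atom_reg unfolding reg_def by auto
  have sx: "sl xs \<le> x" using sl_lub xs by auto
  have "inf (- (sl xs)) x = bot"
  proof (rule ccontr)
    assume "inf (- (sl xs)) x \<noteq> bot"
    then obtain b where b: "atom b" "b \<le> inf (- (sl xs)) x" using atomic by blast
    then have "b \<le> sl xs" using sl_ub xs by auto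
    then show False using b atom_not_both by auto
  qed
  then have "x \<le> - (- (sl xs))" using pseudo_complement inf.commute by metis
  then have "x \<le> sl xs" using r unfolding reg_def by simp
  then have "sl xs = x" using sx by (simp add: order.antisym)
  moreover have "- (- x) = x" using r calculation unfolding reg_def by simp
  ultimately show ?thesis using xs by blast
qed

lemma all_reg: "- (- x) = x" using all_decomp by blast

lemma atoms_le_eq: assumes "\<And>a. atom a \<Longrightarrow> a \<le> x \<Longrightarrow> a \<le> y" shows "x \<le> y"
proof -
  have "inf (- y) x = bot"
  proof (rule ccontr)
    assume "inf (- y) x \<noteq> bot"
    then obtain b where b: "atom b" "b \<le> inf (- y) x" using atomic by blast
    then show False using assms atom_not_both by auto
  qed
  then have "x \<le> - (- y)" using pseudo_complement inf.commute by metis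
  then show ?thesis using all_reg by simp
qed


lemma repr: "\<exists>(A::nat set) (f :: 'a \<Rightarrow> (nat \<times> nat) set).
        inj f \<and>
        (\<forall>x y. f (sup x y) = f x \<union> f y) \<and>
        (\<forall>x y. f (inf x y) = f x \<inter> f y) \<and>
        (\<forall>x. f (- x) = (A \<times> A) - f x) \<and>
        (\<forall>x y. f (x * y) = f x O f y) \<and>
        (\<forall>x. f (conv x) = (f x)\<inverse>) \<and>
        f bot = {} \<and> f top = A \<times> A \<and> f 1 = Id_on A"
proof -
  define I where "I = {p. atom p \<and> p \<le> 1}"
  have finI: "finite I" using fin unfolding I_def by (auto intro: finite_subset)
  define n where "n = card I"
  obtain e where e: "bij_betw e {0..<n} I" using ex_bij_betw_nat_finite[OF finI] unfolding n_def by blast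
  have eI: "atom (e i) \<and> e i \<le> 1" if "i < n" for i
    using e that unfolding bij_betw_def I_def by auto
  have esurj: "\<exists>i<n. p = e i" if "atom p" "p \<le> 1" for p
  proof -
    have "p \<in> e ` {0..<n}" using e that unfolding bij_betw_def I_def by auto
    then show ?thesis by auto
  qed
  have einj: "i = k" if "i < n" "k < n" "e i = e k" for i k
    using e that unfolding bij_betw_def inj_on_def by auto
  define R where "R i j = e i * top * e j" for i j
  have Ratom: "atom (R i j)" if "i < n" "j < n" for i j
  proof -
    have "R i j \<noteq> bot" unfolding R_def using pair_nbot eI that by blast
    then obtain b where b: "atom b" "b \<le> R i j" using atomic by blast
    obtain p q where pq: "atom p" "p \<le> 1" "atom q" "q \<le> 1" "b = p * top * q" using atom_is_rect[OF b(1)] by blast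
    have "inf (R i j) (p * top * q) \<noteq> bot" using b pq(5) atom_nbot by (simp add: inf.absorb2)
    then have "e i = p \<and> e j = q" using disj eI that pq unfolding R_def by blast
    then show ?thesis using b pq unfolding R_def by simp
  qed
  have Rsurj: "\<exists>i<n. \<exists>j<n. a = R i j" if ha: "atom a" for a
  proof -
    obtain p q where pq: "atom p" "p \<le> 1" "atom q" "q \<le> 1" "a = p * top * q" using atom_is_rect[OF ha] by blast
    then show ?thesis using esurj[OF pq(1,2)] esurj[OF pq(3,4)] unfolding R_def by blast
  qed
  have Rinj: "i = k \<and> j = l" if "i < n" "j < n" "k < n" "l < n" "R i j = R k l" for i j k l
  proof -
    have "inf (R i j) (R k l) \<noteq> bot" using that Ratom atom_nbot by simp
    then have "e i = e k \<and> e j = e l" using disj eI that unfolding R_def by blast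
    then show ?thesis using einj that by blast
  qed
  have Rii: "R i i = e i" if "i < n" for i
  proof -
    have "e i = e i * e i * e i" using cor_idem eI that by simp
    also have "\<dots> \<le> R i i" unfolding R_def by (simp add: cm)
    finally show ?thesis using point_facts(1) eI that unfolding R_def by (simp add: order.antisym)
  qed
  have Rconv: "conv (R i j) = R j i" if "i < n" "j < n" for i j
    unfolding R_def using cor_conv eI that by (simp add: conv_comp conv_top mult.assoc)
  have Rcomp: "R i k * R k j = R i j" if "k < n" for i j k
  proof -
    have "R i k * R k j = e i * top * (e k * e k) * top * e j" unfolding R_def by (simp add: mult.assoc)
    also have "\<dots> = e i * (top * e k * top) * e j" using cor_idem eI that by (simp add: mult.assoc)
    also have "\<dots> = R i j" using asimp eI that unfolding R_def by simp
    finally show ?thesis .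
  qed
  have Rp: "e i * R i j * e j = R i j" if "i < n" "j < n" for i j
  proof -
    have "e i * R i j * e j = (e i * e i) * top * (e j * e j)" unfolding R_def by (simp add: mult.assoc)
    then show ?thesis using cor_idem eI that unfolding R_def by simp
  qed
  define f where "f x = {(i, j). i < n \<and> j < n \<and> R i j \<le> x}" for x
  define A where "A = {0..<n}"
  have fmem: "(i, j) \<in> f x \<longleftrightarrow> i < n \<and> j < n \<and> R i j \<le> x" for i j x unfolding f_def by simp
  have finj: "inj f"
  proof (rule injI)
    fix x y assume fxy: "f x = f y"
    have le: "x \<le> y" if "f x = f y" for x y
    proof (rule atoms_le_eq)
      fix a assume "atom a" "a \<le> x"
      then obtain i j where "i < n" "j < n" "a = R i j" using Rsurj by blast
      then show "a \<le> y" using that \<open>a \<le> x\<close> fmem by blast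
    qed
    show "x = y" using le[OF fxy] le[OF fxy[symmetric]] by (simp add: order.antisym)
  qed
  have fsup: "f (sup x y) = f x \<union> f y" for x y
    unfolding f_def using atom_prime Ratom by (auto intro: le_supI1 le_supI2) (meson atom_prime)
  have finf: "f (inf x y) = f x \<inter> f y" for x y unfolding f_def by auto
  have fneg: "f (- x) = (A \<times> A) - f x" for x
  proof -
    have negiff: "R i j \<le> - x \<longleftrightarrow> \<not> R i j \<le> x" if "i < n" "j < n" for i j
      by (meson atom_cases atom_not_both Ratom that)
    show ?thesis unfolding f_def A_def using negiff by auto
  qed
  have fconv: "f (conv x) = (f x)\<inverse>" for x
  proof -
    have convif: "R i j \<le> conv x \<longleftrightarrow> R j i \<le> x" if "i < n" "j < n" for i j
      by (metis Rconv conv_le_iff that)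
    show ?thesis unfolding f_def using convif by auto
  qed
  have fbot: "f bot = {}" unfolding f_def using Ratom atom_nbot bot.extremum_unique by blast
  have ftop: "f top = A \<times> A" unfolding f_def A_def by auto
  have fone: "f 1 = Id_on A"
  proof -
    have "R i j \<le> 1 \<longleftrightarrow> i = j" if hij: "i < n" "j < n" for i j
    proof
      assume "R i j \<le> 1"
      then obtain k where k: "k < n" "R i j = e k" using esurj Ratom hij by blast
      then have "R i j = R k k" using Rii by simp
      then show "i = j" using Rinj hij k by blast
    next
      assume "i = j" then show "R i j \<le> 1" using Rii eI that by simp
    qed
    then show ?thesis unfolding f_def A_def Id_on_def by auto
  qed
  have fcomp: "f (x * y) = f x O f y" for x y
  proof
    show "f x O f y \<subseteq> f (x * y)"
    proof
      fix z assume "z \<in> f x O f y"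
      then obtain i k j where z: "z = (i, j)" "(i, k) \<in> f x" "(k, j) \<in> f y" by blast
      then have "R i k * R k j \<le> x * y" using fmem cm by blast
      then show "z \<in> f (x * y)" using z Rcomp fmem by auto
    qed
  next
    show "f (x * y) \<subseteq> f x O f y"
    proof
      fix z assume "z \<in> f (x * y)"
      then obtain i j where z: "z = (i, j)" "i < n" "j < n" "R i j \<le> x * y" unfolding f_def by blast
      obtain xs where xs: "set xs = {a. atom a \<and> a \<le> 1}" "sl xs = 1" using all_decomp by blast
      have "R i j \<le> x * sl xs * y" using z xs by simp
      then have "R i j \<le> sl (map (\<lambda>a. x * a * y) xs)" using sl_comp by simp
      then obtain b where "b \<in> set (map (\<lambda>a. x * a * y) xs)" "R i j \<le> b" using sl_atom Ratom z by blast
      then obtain p where p: "p \<in> set xs" "R i j \<le> x * p * y" by auto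
      then obtain k where k: "k < n" "p = e k" using xs esurj by blast
      have "R i j = e i * R i j * e j" using Rp z by simp
      also have "\<dots> \<le> e i * (x * e k * y) * e j" using p k by (simp add: cm)
      also have "\<dots> = e i * x * (e k * e k) * y * e j" using cor_idem eI k by (simp add: mult.assoc)
      also have "\<dots> = (e i * x * e k) * (e k * y * e j)" by (simp add: mult.assoc)
      finally have Rle: "R i j \<le> (e i * x * e k) * (e k * y * e j)" .
      have c1: "e i * x * e k \<le> inf x (R i k)"
      proof -
        have "e i * x * e k \<le> 1 * x * 1"
          using cm[OF cm[OF conjunct2[OF eI[OF z(2)]] order.refl[of x]] conjunct2[OF eI[OF k(1)]]] .
        moreover have "e i * x * e k \<le> R i k" unfolding R_def by (simp add: cm)
        ultimately show ?thesis by simp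
      qed
      have c2: "e k * y * e j \<le> inf y (R k j)"
      proof -
        have "e k * y * e j \<le> 1 * y * 1"
          using cm[OF cm[OF conjunct2[OF eI[OF k(1)]] order.refl[of y]] conjunct2[OF eI[OF z(3)]]] .
        moreover have "e k * y * e j \<le> R k j" unfolding R_def by (simp add: cm)
        ultimately show ?thesis by simp
      qed
      have "R i k \<le> x"
      proof (rule ccontr)
        assume "\<not> R i k \<le> x"
        then have "inf x (R i k) = bot" using atom_inf Ratom z k inf.commute by metis
        then have "e i * x * e k = bot" using c1 bot.extremum_unique by simp
        then have "R i j \<le> bot" using Rle by (simp add: comp_bot_left)
        then show False using Ratom z atom_nbot bot.extremum_unique by blast
      qed
      moreover have "R k j \<le> y"
      proof (rule ccontr)
        assume "\<not> R k j \<le> y"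
        then have "inf y (R k j) = bot" using atom_inf Ratom z k inf.commute by metis
        then have "e k * y * e j = bot" using c2 bot.extremum_unique by simp
        then have "R i j \<le> bot" using Rle by (simp add: comp_bot_right)
        then show False using Ratom z atom_nbot bot.extremum_unique by blast
      qed
      ultimately show "z \<in> f x O f y" using z k fmem by blast
    qed
  qed
  show ?thesis using finj fsup finf fneg fcomp fconv fbot ftop fone by blast
qed

end
end

theorem mainTheorem7:
  fixes C :: "'a::stone_relation_algebra \<Rightarrow> nat"
  assumes "atom_simple TYPE('a)"
    and "finite {a::'a. atom a}"
    and "C = count_atoms"
    and "\<forall>x::'a. C x = 0 \<longleftrightarrow> x = bot"
    and "C top = (C 1)^2"
  shows "atomic TYPE('a) \<and> atom_rectangular TYPE('a) \<and> representable TYPE('a)"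
proof -
  have asimp: "\<And>a::'a. atom a \<Longrightarrow> top * a * top = top"
    using assms(1) unfolding atom_simple_def simple_def by blast
  have fin: "finite {a::'a. atom a}" by (rule assms(2))
  have atomic: "\<exists>a. atom a \<and> a \<le> x" if "x \<noteq> bot" for x :: 'a
  proof -
    have "card {a. atom a \<and> a \<le> x} \<noteq> 0" using assms(3,4) that unfolding count_atoms_def by auto
    then have "{a. atom a \<and> a \<le> x} \<noteq> {}" by (metis card.empty)
    then show ?thesis by blast
  qed
  have cnt: "card {a::'a. atom a} = card {p::'a. atom p \<and> p \<le> 1} ^ 2"
    using assms(3,5) unfolding count_atoms_def by simp
  have at: "atomic TYPE('a)" unfolding atomic_def using atomic by blast
  have ar: "atom_rectangular TYPE('a)" unfolding atom_rectangular_def rectangle_def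
  proof (intro allI impI)
    fix a :: 'a assume "atom a"
    then obtain p q where pq: "a = p * top * q" using atom_is_rect[OF asimp fin atomic cnt] by blast
    have "a * top * a = p * (top * q * top * p * top) * q" using pq by (simp add: mult.assoc)
    also have "\<dots> \<le> p * top * q" by (rule cm[OF cm[OF order.refl top_greatest] order.refl])
    finally show "a * top * a \<le> a" using pq by simp
  qed
  have ra: "relation_algebra TYPE('a)" unfolding relation_algebra_def
    using all_reg[OF asimp fin atomic cnt] by blast
  have "representable TYPE('a)" unfolding representable_def
    using ra repr[OF asimp fin atomic cnt] by blast
  then show ?thesis using at ar by blast
qed

end
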